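(* $\lambda<-0.030$, where $$\lambda=\alpha(2)+\sum_{p\ \mathrm{prime}}\alpha(p)-\sum_{j\geq1}\frac1j\left((2\beta_j(2)-1)\prod_{p\geq3\ \mathrm{prime}}\beta_j(p)\right).$$
   Context: For a prime $p$ and an integer $j\geq1$, $\alpha(p)=\left(1-\frac1p\right)\sum_{m\geq1}\frac{1}{p^m}\log\left(1+\frac1p+\cdots+\frac1{p^m}\right)$ and $\beta_j(p)=\left(1-\frac1p\right)\sum_{m\geq0}\frac{1}{p^m}\left(1+\frac1p+\cdots+\frac1{p^m}\right)^{-j}$. (This $\lambda$ is the limit of $\frac1N\sum_{n=1}^N\log\frac{s(2n)}{2n}$, where $s(n)=\sigma(n)-n$ is the sum of the proper divisors of $n$.) *)

theory Defs
  imports "HOL-Analysis.Analysis" "HOL-Computational_Algebra.Primes"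
begin

definition geo_part :: "nat \<Rightarrow> nat \<Rightarrow> real" where
  "geo_part p m = (\<Sum>i\<le>m. 1 / real p ^ i)"

definition alpha :: "nat \<Rightarrow> real" where
  "alpha p = (1 - 1 / real p) * (\<Sum>m. 1 / real p ^ (Suc m) * ln (geo_part p (Suc m)))"

definition beta :: "nat \<Rightarrow> nat \<Rightarrow> real" where
  "beta j p = (1 - 1 / real p) * (\<Sum>m. 1 / real p ^ m * (geo_part p m) powi (- int j))"

definition lambda_const :: real where
  "lambda_const =
     alpha 2 + (\<Sum>p. if prime p then alpha p else 0)
     - (\<Sum>k. let j = Suc k in
          1 / real j * ((2 * beta j 2 - 1) * (\<Prod>p. if prime p \<and> p \<ge> 3 then beta j p else 1)))"

end

theory Submission
  imports Defs
begin


lemma geo_closed: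
  assumes "p \<ge> 2"
  shows "geo_part p m = (real p ^ Suc m - 1) / (real p ^ m * (real p - 1))"
proof (induction m)
  case 0 then show ?case using assms by (simp add: geo_part_def)
next
  case (Suc m)
  have r: "real p \<ge> 2" using assms by simp
  have "geo_part p (Suc m) = geo_part p m + 1 / real p ^ Suc m" by (simp add: geo_part_def)
  also have "\<dots> = (real p ^ Suc (Suc m) - 1) / (real p ^ Suc m * (real p - 1))"
  proof -
    have a: "real p ^ m > 0" "real p - 1 > 0" using r by auto
    show ?thesis unfolding Suc using a
      by (simp add: divide_simps) (simp add: algebra_simps)
  qed
  finally show ?case .
qed

lemma geo_ge1: "geo_part p m \<ge> 1"
proof -
  have "(\<lambda>i. 1 / real p ^ i) 0 \<le> (\<Sum>i\<le>m. 1 / real p ^ i)"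
    by (rule member_le_sum) auto
  then show ?thesis by (simp add: geo_part_def)
qed

lemma geo_le:
  assumes "p \<ge> 2"
  shows "geo_part p m \<le> real p / (real p - 1)"
proof -
  have r: "real p \<ge> 2" using assms by simp
  have "geo_part p m = (real p ^ Suc m - 1) / (real p ^ m * (real p - 1))" by (rule geo_closed[OF assms])
  also have "\<dots> \<le> real p ^ Suc m / (real p ^ m * (real p - 1))"
    using r by (intro divide_right_mono) auto
  also have "\<dots> = real p / (real p - 1)" using r by (simp add: field_simps)
  finally show ?thesis .
qed

lemma geo_sums:
  assumes "r \<ge> (2::real)"
  shows "(\<lambda>n. c * (1/r) ^ (n + k)) sums (c * (1/r)^k / (1 - 1/r))"
proof -
  have "(\<lambda>n. (1/r) ^ n) sums (1 / (1 - 1/r))"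
    by (rule geometric_sums) (use assms in auto)
  from sums_mult[OF this, of "c * (1/r)^k"]
  show ?thesis by (simp add: power_add mult_ac)
qed

lemma alpha_le:
  assumes "p \<ge> 2"
  shows "alpha p \<le> (1 - 1/real p) * ((\<Sum>m<M. 1/real p^Suc m * ln (geo_part p (Suc m)))
            + ln (real p/(real p-1)) / (real p^M * (real p-1)))"
proof -
  define r where "r = real p"
  have r: "r \<ge> 2" using assms r_def by simp
  define a where "a = (\<lambda>m. 1/r^Suc m * ln (geo_part p (Suc m)))"
  define L where "L = ln (r/(r-1))"
  have a0: "0 \<le> a m" for m unfolding a_def using geo_ge1[of p "Suc m"] r by simp
  have aL: "a m \<le> L * (1/r)^(m + 1)" for m
  proof -
    have "ln (geo_part p (Suc m)) \<le> L" unfolding L_def r_def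
      using geo_le[OF assms, of "Suc m"] geo_ge1[of p "Suc m"] by simp
    then show ?thesis unfolding a_def using r by (simp add: power_one_over mult.commute divide_right_mono)
  qed
  have gs: "(\<lambda>n. L * (1/r) ^ (n + 1)) sums (L * (1/r)^1 / (1 - 1/r))"
    by (rule geo_sums[OF r])
  have sa: "summable a"
    by (rule summable_comparison_test'[OF sums_summable[OF gs], of 0]) (use a0 aL in auto)
  have gs2: "(\<lambda>n. L * (1/r) ^ (n + (M+1))) sums (L * (1/r)^(M+1) / (1 - 1/r))"
    by (rule geo_sums[OF r])
  have "(\<Sum>n. a (n + M)) \<le> L * (1/r)^(M+1) / (1 - 1/r)"
    by (rule sums_le[OF _ summable_sums[OF summable_ignore_initial_segment[OF sa]] gs2])
       (use aL in \<open>simp add: add.assoc\<close>)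
  also have "\<dots> = L / (r^M * (r - 1))" using r by (simp add: field_simps power_one_over)
  finally have t: "(\<Sum>n. a (n + M)) \<le> L / (r^M * (r - 1))" .
  have "alpha p = (1 - 1/r) * suminf a" by (simp add: alpha_def a_def r_def)
  also have "suminf a = (\<Sum>n. a (n + M)) + sum a {..<M}" by (rule suminf_split_initial_segment[OF sa])
  finally have "alpha p = (1 - 1/r) * ((\<Sum>n. a (n + M)) + sum a {..<M})" .
  also have "\<dots> \<le> (1 - 1/r) * (sum a {..<M} + L / (r^M * (r - 1)))"
    using t r by (intro mult_left_mono) auto
  finally show ?thesis by (simp add: a_def L_def r_def)
qed

lemma alpha_nonneg:
  assumes "p \<ge> 2" shows "alpha p \<ge> 0"
proof -
  define r where "r = real p"
  have r: "r \<ge> 2" using assms r_def by simp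
  have aL: "1/r^Suc m * ln (geo_part p (Suc m)) \<le> ln (r/(r-1)) * (1/r)^(m + 1)" for m
  proof -
    have "ln (geo_part p (Suc m)) \<le> ln (r/(r-1))" unfolding r_def
      using geo_le[OF assms, of "Suc m"] geo_ge1[of p "Suc m"] by simp
    then show ?thesis using r by (simp add: power_one_over mult.commute divide_right_mono)
  qed
  have gs: "(\<lambda>n. ln (r/(r-1)) * (1/r) ^ (n + 1)) sums (ln (r/(r-1)) * (1/r)^1 / (1 - 1/r))"
    by (rule geo_sums[OF r])
  have sa: "summable (\<lambda>m. 1/r^Suc m * ln (geo_part p (Suc m)))"
    by (rule summable_comparison_test'[OF sums_summable[OF gs], of 0])
       (use aL geo_ge1 r in \<open>auto simp: abs_of_nonneg\<close>)
  have "0 \<le> (\<Sum>m. 1/real p^(Suc m) * ln (geo_part p (Suc m)))"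
    by (rule suminf_nonneg) (use geo_ge1 sa r_def in auto)
  then show ?thesis unfolding alpha_def using r r_def by simp
qed

lemma beta_bounds:
  assumes "p \<ge> 2"
  shows "beta j p \<ge> (1 - 1/real p) * (\<Sum>m<M. (1/real p)^m / geo_part p m ^ j)
            + (1/real p)^M * (1 - 1/real p)^j"
    and "beta j p \<le> 1"
proof -
  define r where "r = real p"
  have r: "r \<ge> 2" using assms r_def by simp
  define b where "b = (\<lambda>m. (1/r)^m / geo_part p m ^ j)"
  have beq: "beta j p = (1 - 1/r) * suminf b"
    by (simp add: beta_def b_def r_def power_int_minus power_one_over field_simps)
  have g1: "geo_part p m ^ j \<ge> 1" for m using geo_ge1[of p m] by (simp add: one_le_power)
  have b0: "0 \<le> b m" for m unfolding b_def using g1[of m] r by simp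
  have bU: "b m \<le> 1 * (1/r)^(m + 0)" for m
  proof -
    have "(1/r)^m / geo_part p m ^ j \<le> (1/r)^m / 1"
      using g1[of m] r by (intro divide_left_mono) auto
    then show ?thesis unfolding b_def by simp
  qed
  have gs: "(\<lambda>n. 1 * (1/r) ^ (n + 0)) sums (1 * (1/r)^0 / (1 - 1/r))"
    by (rule geo_sums[OF r])
  have sb: "summable b"
    by (rule summable_comparison_test'[OF sums_summable[OF gs], of 0]) (use b0 bU in auto)
  have bL: "((1 - 1/r)^j) * (1/r)^(n + M) \<le> b (n + M)" for n
  proof -
    have "geo_part p (n+M) \<le> r/(r-1)" using geo_le[OF assms] r_def by simp
    then have "geo_part p (n+M) ^ j \<le> (r/(r-1))^j" using geo_ge1[of p "n+M"]
      by (intro power_mono) auto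
    then have "1 / (r/(r-1))^j \<le> 1 / geo_part p (n+M) ^ j"
      using g1[of "n+M"] r by (intro divide_left_mono) auto
    moreover have "1 / (r/(r-1))^j = (1 - 1/r)^j" using r by (simp add: field_simps power_divide)
    ultimately have "(1 - 1/r)^j \<le> 1 / geo_part p (n+M) ^ j" by simp
    then have "(1/r)^(n+M) * (1 - 1/r)^j \<le> (1/r)^(n+M) * (1 / geo_part p (n+M) ^ j)"
      using r by (intro mult_left_mono) auto
    then show ?thesis unfolding b_def by (simp add: mult.commute)
  qed
  have gs2: "(\<lambda>n. ((1 - 1/r)^j) * (1/r) ^ (n + M)) sums (((1 - 1/r)^j) * (1/r)^M / (1 - 1/r))"
    by (rule geo_sums[OF r])
  have t: "((1 - 1/r)^j) * (1/r)^M / (1 - 1/r) \<le> (\<Sum>n. b (n + M))"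
    by (rule sums_le[OF bL gs2 summable_sums[OF summable_ignore_initial_segment[OF sb]]])
  have "beta j p = (1 - 1/r) * ((\<Sum>n. b (n + M)) + sum b {..<M})"
    using beq suminf_split_initial_segment[OF sb, of M] by simp
  moreover have "(1 - 1/r) * (((1 - 1/r)^j) * (1/r)^M / (1 - 1/r) + sum b {..<M})
      \<le> (1 - 1/r) * ((\<Sum>n. b (n + M)) + sum b {..<M})"
    using t r by (intro mult_left_mono) auto
  moreover have "(1 - 1/r) * (((1 - 1/r)^j) * (1/r)^M / (1 - 1/r) + sum b {..<M})
      = (1 - 1/r) * sum b {..<M} + (1/r)^M * (1 - 1/r)^j"
    using r by (simp add: field_simps)
  ultimately show "beta j p \<ge> (1 - 1/real p) * (\<Sum>m<M. (1/real p)^m / geo_part p m ^ j)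
            + (1/real p)^M * (1 - 1/real p)^j" by (simp add: b_def r_def)
  have "suminf b \<le> 1 * (1/r)^0 / (1 - 1/r)"
    by (rule sums_le[OF bU summable_sums[OF sb] gs])
  then have "(1 - 1/r) * suminf b \<le> (1 - 1/r) * (1 / (1 - 1/r))"
    using r by (intro mult_left_mono) auto
  then show "beta j p \<le> 1" using beq r by simp
qed


lemma ln_upper_u:
  fixes u :: real
  assumes "0 \<le> u" "u < 1"
  shows "ln ((1+u)/(1-u)) \<le> 2*u + 2*u^3/3 + 2*u^5/(5*(1-u^2))"
proof -
  define h where "h = (\<lambda>t::real. 2*t + 2*t^3/3 + 2*t^5/(5*(1-t^2)) - ln(1+t) + ln(1-t))"
  have d: "(h has_real_derivative (4/5*x^6/(1-x^2)^2)) (at x)" if "x \<in> {0..u}" for x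
  proof -
    have x: "0 \<le> x" "x < 1" using that assms by auto
    have ne: "1 - x^2 \<noteq> 0" using x by (simp add: power2_eq_square) (metis mult_less_cancel_left1 not_less_iff_gr_or_eq x(1) x(2) mult_le_one less_eq_real_def)
    have "(h has_real_derivative (2 + 2*(3*x^2)/3 + 2*(5*x^4*(5*(1-x^2)) - x^5*(5*(-(2*x))))/(5*(1-x^2))^2 - 1/(1+x) + (-1)/(1-x))) (at x)"
      unfolding h_def using x ne
      by (auto intro!: derivative_eq_intros simp: power2_eq_square)
    moreover have "2 + 2*(3*x^2)/3 + 2*(5*x^4*(5*(1-x^2)) - x^5*(5*(-(2*x))))/(5*(1-x^2))^2 - 1/(1+x) + (-1)/(1-x)
        = 4/5*x^6/(1-x^2)^2"
    proof -
      have a: "1 + x \<noteq> 0" "1 - x \<noteq> 0" "(5*(1-x^2))^2 \<noteq> 0" "(1-x^2)^2 \<noteq> 0" using x ne by auto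
      show ?thesis using a by (simp add: divide_simps) algebra
    qed
    ultimately show ?thesis by simp
  qed
  have "h 0 \<le> h u"
    by (rule deriv_nonneg_imp_mono[OF d]) (use assms in auto)
  moreover have "h 0 = 0" by (simp add: h_def)
  moreover have "ln ((1+u)/(1-u)) = ln (1+u) - ln (1-u)" using assms by (simp add: ln_div)
  ultimately show ?thesis by (simp add: h_def)
qed


definition SS :: int where "SS = 100000000"
definition cdiv :: "int \<Rightarrow> int \<Rightarrow> int" where "cdiv a b = - ((- a) div b)"

function ipow :: "int \<Rightarrow> int \<Rightarrow> int" where "ipow x k = (if k \<le> 0 then 1 else x * ipow x (k - 1))"
  by auto
termination by (relation "Wellfounded.measure (\<lambda>(x,k). nat k)") auto
declare ipow.simps[simp del]

function isum :: "(int \<Rightarrow> int) \<Rightarrow> int \<Rightarrow> int \<Rightarrow> int" where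
  "isum f a b = (if b < a then 0 else f a + isum f (a+1) b)"
  by auto
termination by (relation "Wellfounded.measure (\<lambda>(f,a,b). nat (b - a + 1))") auto
declare isum.simps[simp del]

function pwl :: "int \<Rightarrow> int \<Rightarrow> int \<Rightarrow> int \<Rightarrow> int list"
     and pwl2 :: "int \<Rightarrow> int \<Rightarrow> int \<Rightarrow> int \<Rightarrow> int list" where
  "pwl c q y k = (if k \<le> 0 then [] else pwl2 c q (y * c div SS) (k - 1))"
| "pwl2 c q y k = (y div q) # pwl c q y k"
  by pat_completeness auto
termination by (relation "Wellfounded.measure (\<lambda>x. case x of Inl (c,q,y,k) \<Rightarrow> 2 * nat k + 1 | Inr (c,q,y,k) \<Rightarrow> 2 * nat k + 2)") auto
declare pwl.simps[simp del] pwl2.simps[simp del]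

fun addl :: "int list \<Rightarrow> int list \<Rightarrow> int list" where
  "addl (x#xs) (y#ys) = (x+y) # addl xs ys" | "addl _ _ = []"
fun mull :: "int list \<Rightarrow> int list \<Rightarrow> int list" where
  "mull (x#xs) (y#ys) = (x*y div SS) # mull xs ys" | "mull _ _ = []"

definition cG :: "int \<Rightarrow> int \<Rightarrow> int \<Rightarrow> int" where "cG p q m = (SS * q * (p-1)) div (p * q - 1)"

function BS :: "int \<Rightarrow> int \<Rightarrow> int \<Rightarrow> int \<Rightarrow> int list" where
  "BS p q m M = (if M \<le> m then pwl ((SS*(p-1)) div p) q SS 14
     else addl (map (\<lambda>y. (p-1)*y div p) (pwl (cG p q m) q SS 14)) (BS p (p*q) (m+1) M))"
  by auto
termination by (relation "Wellfounded.measure (\<lambda>(p,q,m,M). nat (M - m))") auto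
declare BS.simps[simp del]

definition LuN :: "int \<Rightarrow> int \<Rightarrow> int" where
  "LuN a b = 30*a*b*b*(b*b-a*a) + 10*a*a*a*(b*b-a*a) + 6*a*a*a*a*a"
definition LuD :: "int \<Rightarrow> int \<Rightarrow> int" where "LuD a b = 15*b*b*b*(b*b-a*a)"
definition aTerm :: "int \<Rightarrow> int \<Rightarrow> int \<Rightarrow> int \<Rightarrow> int" where
  "aTerm p q a b = cdiv (SS * LuN a b) (LuD a b * q)"

function AS :: "int \<Rightarrow> int \<Rightarrow> int \<Rightarrow> int \<Rightarrow> int" where
  "AS p q m M = (if M \<le> m then cdiv (SS * LuN 1 (2*p-1)) (LuD 1 (2*p-1) * q * (p-1))
     else aTerm p (p*q) (p*q - 1) (2*p*p*q - p*q - 1) + AS p (p*q) (m+1) M)"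
  by auto
termination by (relation "Wellfounded.measure (\<lambda>(p,q,m,M). nat (M - m))") auto
declare AS.simps[simp del]

definition alphaI :: "int \<Rightarrow> int \<Rightarrow> int" where "alphaI p M = cdiv ((p-1) * AS p 1 0 M) p"
definition Ma :: "int \<Rightarrow> int" where
  "Ma p = (if p = 2 then 10 else if p = 3 then 6 else if p = 5 then 4 else if p = 7 then 3 else 2)"
definition Mb :: "int \<Rightarrow> int" where "Mb p = (if p = 2 then 6 else if p = 3 then 4 else if p = 5 then 3 else 2)"
definition SPo :: "int list" where "SPo = [3,5,7,11,13,17,19,23,29]"
definition candI :: "int \<Rightarrow> bool" where
  "candI n = (\<forall>q\<in>set [2,3,5,7,11,13,17,19,23,29,31]. q dvd n \<longrightarrow> q = n)"
definition KI :: int where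
  "KI = isum (\<lambda>n. if candI n then cdiv SS (n*(n-1)) else 0) 31 1000 + cdiv SS (2*999)"
definition PR :: "int list" where
  "PR = foldr (\<lambda>p acc. mull (BS p 1 0 (Mb p)) acc) SPo (replicate 14 SS)"
fun tL :: "int \<Rightarrow> int \<Rightarrow> int list \<Rightarrow> int list \<Rightarrow> int" where
  "tL K j (b#bs) (pr#prs) = ((max 0 (2 * b - SS) * pr div SS) * max 0 (SS - j * K) div SS) div j + tL K (j+1) bs prs"
| "tL K j _ _ = 0"
definition AI :: "int \<Rightarrow> int" where
  "AI K = alphaI 2 (Ma 2) + alphaI 2 (Ma 2) + sum_list (map (\<lambda>p. alphaI p (Ma p)) SPo) + K"

lemma KI_le: "KI \<le> 774528" by code_simp
lemma numeric_main: "100 * (AI 774528 - tL 774528 1 (BS 2 1 0 (Mb 2)) PR) < - 3 * SS" by code_simp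


lemma SS_real: "real_of_int SS = 100000000" by (simp add: SS_def)

lemma cdiv_ge: assumes "b > 0" shows "real_of_int a / real_of_int b \<le> real_of_int (cdiv a b)"
proof -
  have "real_of_int ((-a) div b) \<le> real_of_int (-a) / real_of_int b" by (rule real_of_int_div4)
  moreover have "real_of_int (cdiv a b) = - real_of_int ((-a) div b)" by (simp add: cdiv_def)
  moreover have "real_of_int (-a) / real_of_int b = - (real_of_int a / real_of_int b)" by simp
  ultimately show ?thesis by linarith
qed

lemma div_le': "real_of_int (a div b) \<le> real_of_int a / real_of_int b" by (rule real_of_int_div4)

lemma ipow_eq: "ipow x (int k) = x ^ k"
proof (induction k)
  case 0 then show ?case by (subst ipow.simps) simp
next
  case (Suc k)
  have "ipow x (int (Suc k)) = x * ipow x (int k)" by (subst ipow.simps) simp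
  then show ?case using Suc by simp
qed

fun spw :: "int \<Rightarrow> int \<Rightarrow> nat \<Rightarrow> int" where
  "spw c y 0 = y" | "spw c y (Suc n) = spw c y n * c div SS"

lemma spw_shift: "spw c (y * c div SS) n = spw c y (Suc n)"
  by (induction n) auto

lemma pwl_closed: "pwl c q y (int n) = map (\<lambda>i. spw c y (Suc i) div q) [0..<n]"
proof (induction n arbitrary: y)
  case 0 then show ?case by (subst pwl.simps) simp
next
  case (Suc n)
  have "pwl c q y (int (Suc n)) = pwl2 c q (y * c div SS) (int n)" by (subst pwl.simps) simp
  also have "\<dots> = ((y * c div SS) div q) # pwl c q (y * c div SS) (int n)" by (subst pwl2.simps) simp
  also have "\<dots> = map (\<lambda>i. spw c y (Suc i) div q) [0..<Suc n]"
    unfolding Suc map_upt_Suc by (simp add: spw_shift)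
  finally show ?case .
qed

lemma spw_bound:
  assumes "0 \<le> c" "real_of_int c \<le> 100000000 * x" "0 \<le> y" "real_of_int y \<le> 100000000 * z"
  shows "0 \<le> spw c y n \<and> real_of_int (spw c y n) \<le> 100000000 * z * x^n"
proof (induction n)
  case 0 then show ?case using assms by simp
next
  case (Suc n)
  have x0: "x \<ge> 0" using assms by linarith
  have z0: "z \<ge> 0" using assms by linarith
  have "0 \<le> spw c y n * c" using Suc assms by simp
  then have nn: "0 \<le> spw c y (Suc n)" by (simp add: SS_def pos_imp_zdiv_nonneg_iff)
  have "real_of_int (spw c y (Suc n)) \<le> real_of_int (spw c y n * c) / real_of_int SS"
    unfolding spw.simps by (rule div_le')
  also have "\<dots> = real_of_int (spw c y n) * real_of_int c / 100000000" by (simp add: SS_def)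
  also have "\<dots> \<le> (100000000 * z * x^n) * (100000000 * x) / 100000000"
    using Suc assms x0 z0 by (intro divide_right_mono mult_mono) auto
  also have "\<dots> = 100000000 * z * x ^ Suc n" by simp
  finally show ?case using nn by simp
qed

lemma addl_map: "addl (map f xs) (map g xs) = map (\<lambda>x. f x + g x) xs"
  by (induction xs) auto

lemma mull_map: "mull (map f xs) (map g xs) = map (\<lambda>x. f x * g x div SS) xs"
  by (induction xs) auto

definition bsel :: "int \<Rightarrow> nat \<Rightarrow> nat \<Rightarrow> nat \<Rightarrow> int" where
  "bsel p k K i = (\<Sum>m\<in>{k..<K}. ((p-1) * (spw (cG p (p^m) (int m)) SS (Suc i) div p^m)) div p)
      + spw ((SS*(p-1)) div p) SS (Suc i) div p^K"

lemma BS_closed: "k \<le> K \<Longrightarrow> BS p (p^k) (int k) (int K) = map (bsel p k K) [0..<14]"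
proof (induction "K - k" arbitrary: k)
  case 0
  then have kK: "k = K" by simp
  have "BS p (p^k) (int k) (int K) = pwl ((SS*(p-1)) div p) (p^k) SS (int 14)"
    by (subst BS.simps) (simp add: kK)
  also have "\<dots> = map (bsel p k K) [0..<14]"
    unfolding pwl_closed bsel_def using kK by simp
  finally show ?case .
next
  case (Suc d)
  then have kK: "k < K" "d = K - Suc k" by auto
  have "BS p (p^k) (int k) (int K) = addl (map (\<lambda>y. (p-1)*y div p) (pwl (cG p (p^k) (int k)) (p^k) SS (int 14)))
          (BS p (p^Suc k) (int (Suc k)) (int K))"
    by (subst BS.simps) (use kK in \<open>simp add: add.commute\<close>)
  also have "BS p (p^Suc k) (int (Suc k)) (int K) = map (bsel p (Suc k) K) [0..<14]"
    by (rule Suc.hyps(1)) (use kK in auto)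
  also have "addl (map (\<lambda>y. (p-1)*y div p) (pwl (cG p (p^k) (int k)) (p^k) SS (int 14))) (map (bsel p (Suc k) K) [0..<14])
      = map (bsel p k K) [0..<14]"
    unfolding pwl_closed map_map o_def addl_map
  proof (rule map_cong[OF refl])
    fix i
    show "(p - 1) * (spw (cG p (p ^ k) (int k)) SS (Suc i) div p ^ k) div p + bsel p (Suc k) K i = bsel p k K i"
      unfolding bsel_def using kK by (simp add: sum.atLeast_Suc_lessThan)
  qed
  finally show ?case .
qed

lemma divq_le:
  assumes "0 \<le> a" "real_of_int a \<le> B" "q > 0"
  shows "0 \<le> a div q \<and> real_of_int (a div q) \<le> B / real_of_int q"
proof
  show "0 \<le> a div q" using assms by (simp add: pos_imp_zdiv_nonneg_iff)
  have "real_of_int (a div q) \<le> real_of_int a / real_of_int q" by (rule div_le')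
  also have "\<dots> \<le> B / real_of_int q" using assms by (intro divide_right_mono) auto
  finally show "real_of_int (a div q) \<le> B / real_of_int q" .
qed

lemma bsel_le:
  assumes p: "p \<ge> 2"
  shows "0 \<le> bsel (int p) 0 K i \<and> real_of_int (bsel (int p) 0 K i) \<le> 100000000 * beta (Suc i) p"
proof -
  define r where "r = real p"
  have r: "r \<ge> 2" using p r_def by simp
  have tm: "0 \<le> ((int p - 1) * (spw (cG (int p) (int p^m) (int m)) SS (Suc i) div int p^m)) div int p
     \<and> real_of_int (((int p - 1) * (spw (cG (int p) (int p^m) (int m)) SS (Suc i) div int p^m)) div int p)
       \<le> 100000000 * ((1 - 1/r) * ((1/r)^m / geo_part p m ^ Suc i))" for m
  proof -
    define x where "x = 1 / geo_part p m"
    have g: "geo_part p m = (r ^ Suc m - 1) / (r ^ m * (r - 1))" using geo_closed[OF p] r_def by simp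
    have rm: "r ^ Suc m > 1" by (rule one_less_power) (use r in auto)
    have x: "x = r^m * (r-1) / (r ^ Suc m - 1)" unfolding x_def g using r rm by simp
    have qpos: "int p * int p ^ m - 1 > 0"
    proof -
      have "real_of_int (int p * int p ^ m - 1) = r ^ Suc m - 1" by (simp add: r_def)
      then show ?thesis using rm by linarith
    qed
    have c0: "0 \<le> cG (int p) (int p^m) (int m)" unfolding cG_def using p qpos
      by (simp add: SS_def pos_imp_zdiv_nonneg_iff)
    have "real_of_int (cG (int p) (int p^m) (int m)) \<le> real_of_int (SS * int p^m * (int p - 1)) / real_of_int (int p * int p ^ m - 1)"
      unfolding cG_def by (rule div_le')
    also have "\<dots> = 100000000 * x" unfolding x using p by (simp add: SS_def r_def)
    finally have c1: "real_of_int (cG (int p) (int p^m) (int m)) \<le> 100000000 * x" .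
    have sp: "0 \<le> spw (cG (int p) (int p^m) (int m)) SS (Suc i) \<and>
        real_of_int (spw (cG (int p) (int p^m) (int m)) SS (Suc i)) \<le> 100000000 * 1 * x ^ Suc i"
      by (rule spw_bound[OF c0 c1]) (auto simp: SS_def)
    have d1: "0 \<le> spw (cG (int p) (int p^m) (int m)) SS (Suc i) div int p^m \<and>
       real_of_int (spw (cG (int p) (int p^m) (int m)) SS (Suc i) div int p^m) \<le> (100000000 * 1 * x ^ Suc i) / real_of_int (int p^m)"
      by (rule divq_le) (use sp p in auto)
    define X where "X = spw (cG (int p) (int p^m) (int m)) SS (Suc i) div int p^m"
    have m1: "0 \<le> (int p - 1) * X \<and>
       real_of_int ((int p - 1) * X) \<le> (r - 1) * ((100000000 * 1 * x ^ Suc i) / real_of_int (int p^m))"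
    proof -
      have "real_of_int ((int p - 1) * X) = (r-1) * real_of_int X" using p by (simp add: r_def)
      also have "\<dots> \<le> (r - 1) * ((100000000 * 1 * x ^ Suc i) / real_of_int (int p^m))"
        using d1 r unfolding X_def by (intro mult_left_mono) auto
      finally show ?thesis using d1 p unfolding X_def by simp
    qed
    have d2: "0 \<le> ((int p - 1) * X) div int p \<and>
       real_of_int (((int p - 1) * X) div int p)
       \<le> ((r - 1) * ((100000000 * 1 * x ^ Suc i) / real_of_int (int p^m))) / real_of_int (int p)"
      by (rule divq_le[OF conjunct1[OF m1] conjunct2[OF m1]]) (use p in auto)
    have gp: "geo_part p m > 0" using geo_ge1[of p m] by simp
    have "((r - 1) * ((100000000 * 1 * x ^ Suc i) / real_of_int (int p^m))) / real_of_int (int p)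
        = 100000000 * ((1 - 1/r) * ((1/r)^m / geo_part p m ^ Suc i))"
      unfolding x_def using r gp by (simp add: r_def field_simps power_one_over power_divide)
    then show ?thesis using d2 unfolding X_def by simp
  qed
  have tail: "0 \<le> spw ((SS*(int p-1)) div int p) SS (Suc i) div int p^K \<and>
      real_of_int (spw ((SS*(int p-1)) div int p) SS (Suc i) div int p^K) \<le> 100000000 * ((1/r)^K * (1 - 1/r)^Suc i)"
  proof -
    have c0: "0 \<le> (SS*(int p-1)) div int p" using p by (simp add: SS_def pos_imp_zdiv_nonneg_iff)
    have "real_of_int ((SS*(int p-1)) div int p) \<le> real_of_int (SS*(int p-1)) / real_of_int (int p)" by (rule div_le')
    also have "\<dots> = 100000000 * (1 - 1/r)" using r by (simp add: SS_def r_def field_simps)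
    finally have c1: "real_of_int ((SS*(int p-1)) div int p) \<le> 100000000 * (1 - 1/r)" .
    have sp: "0 \<le> spw ((SS*(int p-1)) div int p) SS (Suc i) \<and>
        real_of_int (spw ((SS*(int p-1)) div int p) SS (Suc i)) \<le> 100000000 * 1 * (1 - 1/r) ^ Suc i"
      by (rule spw_bound[OF c0 c1]) (auto simp: SS_def)
    have d1: "0 \<le> spw ((SS*(int p-1)) div int p) SS (Suc i) div int p^K \<and>
       real_of_int (spw ((SS*(int p-1)) div int p) SS (Suc i) div int p^K) \<le> (100000000 * 1 * (1 - 1/r) ^ Suc i) / real_of_int (int p^K)"
      by (rule divq_le) (use sp p in auto)
    moreover have "(100000000 * 1 * (1 - 1/r) ^ Suc i) / real_of_int (int p^K) = 100000000 * ((1/r)^K * (1 - 1/r)^Suc i)"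
      using r by (simp add: r_def power_one_over)
    ultimately show ?thesis by simp
  qed
  have s0: "0 \<le> (\<Sum>m\<in>{0..<K}. ((int p - 1) * (spw (cG (int p) (int p^m) (int m)) SS (Suc i) div int p^m)) div int p)"
    using tm by (intro sum_nonneg) auto
  have s1: "real_of_int (\<Sum>m\<in>{0..<K}. ((int p - 1) * (spw (cG (int p) (int p^m) (int m)) SS (Suc i) div int p^m)) div int p)
      \<le> (\<Sum>m\<in>{0..<K}. 100000000 * ((1 - 1/r) * ((1/r)^m / geo_part p m ^ Suc i)))"
    unfolding of_int_sum using tm by (intro sum_mono) auto
  have "real_of_int (bsel (int p) 0 K i) \<le> (\<Sum>m\<in>{0..<K}. 100000000 * ((1 - 1/r) * ((1/r)^m / geo_part p m ^ Suc i)))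
        + 100000000 * ((1/r)^K * (1 - 1/r)^Suc i)"
    unfolding bsel_def using s1 tail by simp
  also have "\<dots> = 100000000 * ((1 - 1/r) * (\<Sum>m<K. (1/r)^m / geo_part p m ^ Suc i) + (1/r)^K * (1 - 1/r)^Suc i)"
    by (simp only: sum_distrib_left atLeast0LessThan distrib_left)
  also have "\<dots> \<le> 100000000 * beta (Suc i) p"
    using beta_bounds(1)[OF p, where M=K and j="Suc i"] by (simp add: r_def)
  finally show ?thesis using s0 tail by (simp add: bsel_def)
qed

definition Lu :: "real \<Rightarrow> real" where "Lu u = 2*u + 2*u^3/3 + 2*u^5/(5*(1-u^2))"

lemma ln_le_Lu:
  assumes "x \<ge> 1" shows "ln x \<le> Lu ((x-1)/(x+1))"
proof -
  define u where "u = (x-1)/(x+1)"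
  have u: "0 \<le> u" "u < 1" using assms by (auto simp: u_def)
  have "(1+u)/(1-u) = x" using assms by (simp add: u_def field_simps)
  then show ?thesis using ln_upper_u[OF u] by (simp add: Lu_def u_def)
qed

lemma Lu_frac:
  assumes "0 \<le> a" "a < (b::real)"
  shows "Lu (a/b) = (30*a*b*b*(b*b-a*a) + 10*a*a*a*(b*b-a*a) + 6*a*a*a*a*a)/(15*b*b*b*(b*b-a*a))"
proof -
  have b: "b > 0" using assms by simp
  have ba: "b*b - a*a > 0" using assms by (simp add: mult_strict_mono' mult_strict_mono)
  have "1 - (a/b)^2 = (b*b - a*a)/(b*b)" using b by (simp add: field_simps power2_eq_square)
  then show ?thesis using b ba unfolding Lu_def by (simp add: field_simps power2_eq_square) (simp add: algebra_simps power_def)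
qed

lemma LuI:
  assumes "0 \<le> a" "a < b"
  shows "real_of_int (LuN a b) / real_of_int (LuD a b) = Lu (real_of_int a / real_of_int b)"
  using Lu_frac[of "real_of_int a" "real_of_int b"] assms by (simp add: LuN_def LuD_def)

lemma LuD_pos: assumes "0 \<le> a" "a < b" shows "LuD a b > 0"
proof -
  have "b*b - a*a > 0" using assms by (simp add: mult_strict_mono' mult_strict_mono)
  then show ?thesis using assms unfolding LuD_def by simp
qed

lemma aTerm_ge:
  assumes "0 \<le> a" "a < b" "q > 0"
  shows "100000000 * (Lu (real_of_int a / real_of_int b) / real_of_int q) \<le> real_of_int (aTerm p q a b)"
proof -
  have D: "LuD a b * q > 0" using LuD_pos[OF assms(1,2)] assms(3) by simp
  have "real_of_int (SS * LuN a b) / real_of_int (LuD a b * q) \<le> real_of_int (aTerm p q a b)"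
    unfolding aTerm_def by (rule cdiv_ge[OF D])
  moreover have "real_of_int (SS * LuN a b) / real_of_int (LuD a b * q)
      = 100000000 * ((real_of_int (LuN a b) / real_of_int (LuD a b)) / real_of_int q)"
    by (simp add: SS_def field_simps)
  ultimately show ?thesis using LuI[OF assms(1,2)] by simp
qed

lemma AS_ge:
  fixes p :: nat
  assumes p: "p \<ge> 2"
  shows "k \<le> K \<Longrightarrow> 100000000 * ((\<Sum>m\<in>{k..<K}. Lu ((real p^(m+1)-1)/(2*real p^(m+2) - real p^(m+1) - 1)) / real p^(m+1))
      + Lu (1/(2*real p-1)) / (real p^K*(real p-1))) \<le> real_of_int (AS (int p) (int p^k) (int k) (int K))"
proof (induction "K - k" arbitrary: k)
  case 0
  then have kK: "k = K" by simp
  have eq: "AS (int p) (int p^k) (int k) (int K) = cdiv (SS * LuN 1 (2*int p-1)) (LuD 1 (2*int p-1) * int p^k * (int p-1))"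
    by (subst AS.simps) (simp add: kK)
  have D: "LuD 1 (2*int p-1) * int p^k * (int p-1) > 0"
    using LuD_pos[of 1 "2*int p - 1"] p by simp
  have "real_of_int (SS * LuN 1 (2*int p-1)) / real_of_int (LuD 1 (2*int p-1) * int p^k * (int p-1))
      \<le> real_of_int (AS (int p) (int p^k) (int k) (int K))"
    unfolding eq by (rule cdiv_ge[OF D])
  moreover have "real_of_int (SS * LuN 1 (2*int p-1)) / real_of_int (LuD 1 (2*int p-1) * int p^k * (int p-1))
      = 100000000 * ((real_of_int (LuN 1 (2*int p-1)) / real_of_int (LuD 1 (2*int p-1))) / (real p^k*(real p-1)))"
    by (simp add: SS_def field_simps)
  moreover have "real_of_int (LuN 1 (2*int p-1)) / real_of_int (LuD 1 (2*int p-1)) = Lu (1/(2*real p-1))"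
    using LuI[of 1 "2*int p - 1"] p by simp
  ultimately show ?case using kK by simp
next
  case (Suc d)
  then have kK: "k < K" "d = K - Suc k" by auto
  define r where "r = real p"
  have r: "r \<ge> 2" using p r_def by simp
  have AS_eq: "AS (int p) (int p^k) (int k) (int K) = aTerm (int p) (int p * int p^k) (int p * int p^k - 1)
        (2 * int p * int p * int p^k - int p * int p^k - 1) + AS (int p) (int p^Suc k) (int (Suc k)) (int K)"
    by (subst AS.simps) (use kK in \<open>simp add: add.commute\<close>)
  have IH: "100000000 * ((\<Sum>m\<in>{Suc k..<K}. Lu ((real p^(m+1)-1)/(2*real p^(m+2) - real p^(m+1) - 1)) / real p^(m+1))
      + Lu (1/(2*real p-1)) / (real p^K*(real p-1))) \<le> real_of_int (AS (int p) (int p^Suc k) (int (Suc k)) (int K))"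
    by (rule Suc.hyps(1)) (use kK in auto)
  have rk: "r^(k+1) \<ge> 1" using r by (simp add: one_le_power del: power_Suc)
  have a0: "0 \<le> int p * int p^k - 1" using p by (simp add: one_le_power)
  have ab: "int p * int p^k - 1 < 2 * int p * int p * int p^k - int p * int p^k - 1"
  proof -
    have "int p * int p^k > 0" using p by simp
    then have "int p * int p^k < int p * (int p * int p^k)" using p by simp
    then show ?thesis by simp
  qed
  have q0: "int p * int p^k > 0" using p by simp
  have aT: "100000000 * (Lu (real_of_int (int p * int p^k - 1) / real_of_int (2 * int p * int p * int p^k - int p * int p^k - 1))
      / real_of_int (int p * int p^k)) \<le> real_of_int (aTerm (int p) (int p * int p^k) (int p * int p^k - 1)
        (2 * int p * int p * int p^k - int p * int p^k - 1))"
    by (rule aTerm_ge[OF a0 ab q0])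
  have eqA: "Lu (real_of_int (int p * int p^k - 1) / real_of_int (2 * int p * int p * int p^k - int p * int p^k - 1))
      / real_of_int (int p * int p^k) = Lu ((real p^(k+1)-1)/(2*real p^(k+2) - real p^(k+1) - 1)) / real p^(k+1)"
    by (simp add: mult.assoc)
  have "(\<Sum>m\<in>{k..<K}. Lu ((real p^(m+1)-1)/(2*real p^(m+2) - real p^(m+1) - 1)) / real p^(m+1))
      = Lu ((real p^(k+1)-1)/(2*real p^(k+2) - real p^(k+1) - 1)) / real p^(k+1)
        + (\<Sum>m\<in>{Suc k..<K}. Lu ((real p^(m+1)-1)/(2*real p^(m+2) - real p^(m+1) - 1)) / real p^(m+1))"
    using kK by (simp add: sum.atLeast_Suc_lessThan)
  then show ?case using AS_eq IH aT eqA by (simp add: algebra_simps)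
qed

lemma le_div_1e8: "100000000 * x \<le> y \<Longrightarrow> x \<le> y / (100000000::real)" by simp

lemma alpha_le_I:
  fixes p :: nat
  assumes p: "p \<ge> 2"
  shows "alpha p \<le> real_of_int (alphaI (int p) (int K)) / 100000000"
proof -
  define r where "r = real p"
  have r: "r \<ge> 2" using p r_def by simp
  have lnm: "ln (geo_part p (Suc m)) \<le> Lu ((r^(m+1)-1)/(2*r^(m+2) - r^(m+1) - 1))" for m
  proof -
    define g where "g = geo_part p (Suc m)"
    have g: "g = (r ^ Suc (Suc m) - 1) / (r ^ Suc m * (r - 1))" using geo_closed[OF p] r_def g_def by simp
    have D: "r ^ Suc m * (r - 1) > 0" using r by simp
    define Dd where "Dd = r ^ Suc m * (r - 1)"
    have Dp: "Dd > 0" using D by (simp add: Dd_def)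
    have gD: "g = (r ^ Suc (Suc m) - 1) / Dd" unfolding g Dd_def ..
    have g1: "g - 1 = (r^(m+1)-1) / Dd"
    proof -
      have "g - 1 = (r ^ Suc (Suc m) - 1 - Dd) / Dd" unfolding gD using Dp by (simp add: diff_divide_distrib)
      moreover have "r ^ Suc (Suc m) - 1 - Dd = r^(m+1) - 1" by (simp add: Dd_def algebra_simps)
      ultimately show ?thesis by simp
    qed
    have g2: "g + 1 = (2*r^(m+2) - r^(m+1) - 1) / Dd"
    proof -
      have "g + 1 = (r ^ Suc (Suc m) - 1 + Dd) / Dd" unfolding gD using Dp by (simp add: add_divide_distrib)
      moreover have "r ^ Suc (Suc m) - 1 + Dd = 2*r^(m+2) - r^(m+1) - 1" by (simp add: Dd_def algebra_simps)
      ultimately show ?thesis by simp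
    qed
    have "(g-1)/(g+1) = (r^(m+1)-1)/(2*r^(m+2) - r^(m+1) - 1)"
      unfolding g1 g2 using Dp by simp
    then show ?thesis using ln_le_Lu[of g] geo_ge1[of p "Suc m"] g_def by simp
  qed
  have lnt: "ln (r/(r-1)) \<le> Lu (1/(2*r-1))"
  proof -
    have "(r/(r-1) - 1)/(r/(r-1) + 1) = 1/(2*r-1)" using r by (simp add: field_simps)
    moreover have "r/(r-1) \<ge> 1" using r by simp
    ultimately show ?thesis using ln_le_Lu[of "r/(r-1)"] by simp
  qed
  have "alpha p \<le> (1 - 1/r) * ((\<Sum>m<K. 1/r^Suc m * ln (geo_part p (Suc m))) + ln (r/(r-1)) / (r^K * (r-1)))"
    using alpha_le[OF p, of K] by (simp add: r_def)
  also have "\<dots> \<le> (1 - 1/r) * ((\<Sum>m\<in>{0..<K}. Lu ((real p^(m+1)-1)/(2*real p^(m+2) - real p^(m+1) - 1)) / real p^(m+1))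
      + Lu (1/(2*real p-1)) / (real p^K*(real p-1)))"
  proof -
    have s1: "(\<Sum>m<K. 1/r^Suc m * ln (geo_part p (Suc m))) \<le> (\<Sum>m<K. Lu ((real p^(m+1)-1)/(2*real p^(m+2) - real p^(m+1) - 1)) / real p^(m+1))"
    proof (rule sum_mono)
      fix m assume "m \<in> {..<K}"
      have "ln (geo_part p (Suc m)) / r^Suc m \<le> Lu ((r^(m+1)-1)/(2*r^(m+2) - r^(m+1) - 1)) / r^Suc m"
        using lnm[of m] r by (intro divide_right_mono) auto
      then show "1/r^Suc m * ln (geo_part p (Suc m)) \<le> Lu ((real p^(m+1)-1)/(2*real p^(m+2) - real p^(m+1) - 1)) / real p^(m+1)"
        by (simp add: r_def)
    qed
    have s2: "ln (r/(r-1)) / (r^K * (r-1)) \<le> Lu (1/(2*real p-1)) / (real p^K*(real p-1))"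
      using lnt r by (simp add: r_def divide_right_mono)
    show ?thesis using s1 s2 r by (intro mult_left_mono add_mono) (auto simp: atLeast0LessThan)
  qed
  also have "\<dots> \<le> (1 - 1/r) * (real_of_int (AS (int p) 1 0 (int K)) / 100000000)"
    using le_div_1e8[OF AS_ge[OF p le0[of K], unfolded power_0 of_nat_0]] r by (intro mult_left_mono) auto
  also have "\<dots> = (real_of_int ((int p - 1) * AS (int p) 1 0 (int K)) / real_of_int (int p)) / 100000000"
    using r by (simp add: r_def field_simps)
  also have "\<dots> \<le> real_of_int (alphaI (int p) (int K)) / 100000000"
    unfolding alphaI_def by (intro divide_right_mono cdiv_ge) (use p in auto)
  finally show ?thesis .
qed


lemma small_chk: "\<forall>i\<in>set [0..<31]. 2 \<le> i \<longrightarrow> (\<forall>q\<in>set [2,3,5]. q dvd i \<longrightarrow> q = i) \<longrightarrow> i \<in> set [2::nat,3,5,7,11,13,17,19,23,29]"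
  by code_simp

lemma prime_cand: "prime (p::nat) \<Longrightarrow> q \<ge> 2 \<Longrightarrow> q dvd p \<Longrightarrow> q = p"
  using prime_nat_iff by auto

lemma small_primes: "prime (p::nat) \<Longrightarrow> p < 31 \<Longrightarrow> p \<in> set [2,3,5,7,11,13,17,19,23,29]"
proof -
  assume pr: "prime p" and lt: "p < 31"
  have "p \<in> set [0..<31]" using lt by simp
  moreover have "2 \<le> p" using pr prime_ge_2_nat by blast
  moreover have "\<forall>q\<in>set [2,3,5]. q dvd p \<longrightarrow> q = p" using prime_cand[OF pr] by auto
  ultimately show ?thesis using small_chk by blast
qed

lemma weier:
  fixes f :: "nat \<Rightarrow> real"
  assumes "finite A" "\<And>i. i \<in> A \<Longrightarrow> 0 \<le> f i \<and> f i \<le> 1"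
  shows "1 - (\<Sum>i\<in>A. 1 - f i) \<le> (\<Prod>i\<in>A. f i)"
  using assms
proof (induction A rule: finite_induct)
  case empty then show ?case by simp
next
  case (insert x A)
  have IH: "1 - (\<Sum>i\<in>A. 1 - f i) \<le> (\<Prod>i\<in>A. f i)" using insert by auto
  have fx: "0 \<le> f x" "f x \<le> 1" using insert.prems by auto
  have S0: "(\<Sum>i\<in>A. 1 - f i) \<ge> 0" using insert.prems by (intro sum_nonneg) auto
  have "1 - (\<Sum>i\<in>insert x A. 1 - f i) = (1 - (\<Sum>i\<in>A. 1 - f i)) - (1 - f x)"
    using insert by simp
  also have "\<dots> \<le> f x * (1 - (\<Sum>i\<in>A. 1 - f i))"
  proof -
    have "(1 - f x) * (\<Sum>i\<in>A. 1 - f i) \<ge> 0" using fx S0 by simp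
    then show ?thesis by (simp add: algebra_simps)
  qed
  also have "\<dots> \<le> f x * (\<Prod>i\<in>A. f i)" using IH fx by (intro mult_left_mono) auto
  also have "\<dots> = (\<Prod>i\<in>insert x A. f i)" using insert by simp
  finally show ?case .
qed

lemma prod_bound:
  fixes f :: "nat \<Rightarrow> real"
  assumes pos: "\<And>i. 0 < f i" and le1: "\<And>i. f i \<le> 1"
    and S: "\<And>n. (\<Sum>i\<in>{a..<n}. 1 - f i) \<le> B" and B: "B < 1"
  shows "prodinf f \<ge> (\<Prod>i<a. f i) * (1 - B)" "prodinf f \<le> 1"
proof -
  define X where "X = (\<lambda>n. \<Prod>i\<le>n. f i)"
  have B0: "0 \<le> B" using S[of a] by simp
  have Xdec: "decseq X" unfolding decseq_Suc_iff X_def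
  proof
    fix n
    have "(\<Prod>i\<le>Suc n. f i) = f (Suc n) * (\<Prod>i\<le>n. f i)" by simp
    also have "\<dots> \<le> 1 * (\<Prod>i\<le>n. f i)"
      using pos le1 by (intro mult_right_mono prod_nonneg) (auto intro: less_imp_le)
    finally show "(\<Prod>i\<le>Suc n. f i) \<le> (\<Prod>i\<le>n. f i)" by simp
  qed
  define c where "c = (\<Prod>i<a. f i) * (1 - B)"
  have P0: "(\<Prod>i<a. f i) > 0" using pos by (intro prod_pos) auto
  have c0: "c > 0" unfolding c_def using P0 B by simp
  have Xc: "c \<le> X n" for n
  proof (cases "n < a")
    case True
    have "{..<a} = {..n} \<union> {Suc n..<a}" using True by auto
    moreover have "prod f ({..n} \<union> {Suc n..<a}) = prod f {..n} * prod f {Suc n..<a}"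
      by (rule prod.union_disjoint) auto
    ultimately have "(\<Prod>i<a. f i) = (\<Prod>i\<le>n. f i) * (\<Prod>i\<in>{Suc n..<a}. f i)" by simp
    also have "\<dots> \<le> (\<Prod>i\<le>n. f i) * 1"
      using pos le1 by (intro mult_left_mono prod_le_1 prod_nonneg) (auto intro: less_imp_le)
    finally have "(\<Prod>i<a. f i) \<le> X n" by (simp add: X_def)
    moreover have "c \<le> (\<Prod>i<a. f i)" unfolding c_def using P0 B0 by (simp add: mult_left_le)
    ultimately show ?thesis by simp
  next
    case False
    have "{..n} = {..<a} \<union> {a..<Suc n}" using False by auto
    moreover have "prod f ({..<a} \<union> {a..<Suc n}) = prod f {..<a} * prod f {a..<Suc n}"
      by (rule prod.union_disjoint) auto
    ultimately have "X n = (\<Prod>i<a. f i) * (\<Prod>i\<in>{a..<Suc n}. f i)" unfolding X_def by simp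
    moreover have "1 - B \<le> (\<Prod>i\<in>{a..<Suc n}. f i)"
    proof -
      have "1 - (\<Sum>i\<in>{a..<Suc n}. 1 - f i) \<le> (\<Prod>i\<in>{a..<Suc n}. f i)"
        by (rule weier) (use pos le1 in \<open>auto intro: less_imp_le\<close>)
      then show ?thesis using S[of "Suc n"] by linarith
    qed
    ultimately show ?thesis unfolding c_def using P0 by (simp add: mult_left_mono)
  qed
  obtain L where L: "X \<longlonglongrightarrow> L" "\<forall>i. L \<le> X i"
    using decseq_convergent[OF Xdec, of c] Xc by blast
  have Lc: "c \<le> L" by (rule LIMSEQ_le_const[OF L(1)]) (use Xc in auto)
  have "raw_has_prod f 0 L" unfolding raw_has_prod_def using L(1) Lc c0 by (simp add: X_def)
  then have "f has_prod L" by (simp add: has_prod_def)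
  then have PL: "prodinf f = L" using has_prod_unique by metis
  show "prodinf f \<ge> (\<Prod>i<a. f i) * (1 - B)" using PL Lc c_def by simp
  have "L \<le> X 0" using L(2) by simp
  also have "X 0 \<le> 1" using le1 by (simp add: X_def)
  finally show "prodinf f \<le> 1" using PL by simp
qed

lemma beta_pos: "p \<ge> 2 \<Longrightarrow> beta j p > 0"
proof -
  assume p: "p \<ge> 2"
  have "beta j p \<ge> (1 - 1/real p) * (\<Sum>m<0. (1/real p)^m / geo_part p m ^ j) + (1/real p)^0 * (1 - 1/real p)^j"
    by (rule beta_bounds(1)[OF p])
  moreover have "(1 - 1/real p)^j > 0" using p by simp
  ultimately show ?thesis by simp
qed

lemma one_minus_beta:
  assumes p: "p \<ge> 2"
  shows "1 - beta j p \<le> real j / (real p * (real p - 1))"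
proof -
  define r where "r = real p"
  have r: "r \<ge> 2" using p r_def by simp
  have "beta j p \<ge> (1 - 1/r) * (\<Sum>m<1. (1/r)^m / geo_part p m ^ j) + (1/r)^1 * (1 - 1/r)^j"
    using beta_bounds(1)[OF p, where M=1 and j=j] by (simp add: r_def)
  moreover have "geo_part p 0 = 1" by (simp add: geo_part_def)
  ultimately have b: "beta j p \<ge> (1 - 1/r) + (1/r) * (1 - 1/r)^j" by simp
  have "1 + real j * (-1/r) \<le> (1 + (-1/r))^j"
    by (rule Bernoulli_inequality) (use r in simp)
  then have "(1 - 1/r)^j \<ge> 1 - real j / r" by simp
  then have "(1/r) * (1 - 1/r)^j \<ge> (1/r) * (1 - real j / r)" using r by (intro mult_left_mono) auto
  moreover have "(1 - 1/r) + (1/r) * (1 - real j / r) = 1 - real j / r^2"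
    using r by (simp add: field_simps power2_eq_square)
  ultimately have "beta j p \<ge> 1 - real j / r^2" using b by linarith
  moreover have "real j / r^2 \<le> real j / (r * (r - 1))"
    using r by (intro divide_left_mono) (auto simp: power2_eq_square)
  ultimately show ?thesis by (simp add: r_def)
qed

lemma alpha_mid:
  assumes p: "p \<ge> 2"
  shows "alpha p \<le> 1 / (real p * (real p - 1))"
proof -
  define r where "r = real p"
  have r: "r \<ge> 2" using p r_def by simp
  have "alpha p \<le> (1 - 1/r) * ((\<Sum>m<0. 1/r^Suc m * ln (geo_part p (Suc m))) + ln (r/(r-1)) / (r^0 * (r-1)))"
    using alpha_le[OF p, of 0] by (simp add: r_def)
  also have "\<dots> = (1 - 1/r) * (ln (r/(r-1)) / (r-1))" by simp
  also have "\<dots> \<le> (1 - 1/r) * ((r/(r-1) - 1) / (r-1))"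
    using r by (intro mult_left_mono divide_right_mono ln_le_minus_one) auto
  also have "\<dots> = 1 / (r * (r - 1))"
  proof -
    have ne: "r - 1 \<noteq> 0" "r \<noteq> 0" using r by auto
    have e1: "r/(r-1) - 1 = 1/(r-1)" using ne by (simp add: field_simps)
    have e2: "1 - 1/r = (r-1)/r" using ne by (simp add: field_simps)
    show ?thesis unfolding e1 e2 using ne by simp
  qed
  finally show ?thesis by (simp add: r_def)
qed

lemma telesc:
  assumes "a \<ge> 2"
  shows "(\<Sum>i\<in>{a..<n}. 1 / (real i * (real i - 1))) \<le> 1 / (real a - 1)"
proof (cases "a \<le> n")
  case False then show ?thesis using assms by simp
next
  case True
  have "(\<Sum>i\<in>{a..<n}. 1 / (real i * (real i - 1))) = 1 / (real a - 1) - 1 / (real n - 1)"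
    using True
  proof (induction n rule: dec_induct)
    case base then show ?case by simp
  next
    case (step n)
    have n2: "real n \<ge> 2" using step assms by simp
    have "(\<Sum>i\<in>{a..<Suc n}. 1 / (real i * (real i - 1))) = 1 / (real a - 1) - 1 / (real n - 1) + 1 / (real n * (real n - 1))"
      using step by simp
    also have "\<dots> = 1 / (real a - 1) - 1 / (real (Suc n) - 1)"
    proof -
      have "real n - 1 \<noteq> 0" "real n \<noteq> 0" using n2 by auto
      then have "1 / (real n * (real n - 1)) = 1 / (real n - 1) - 1 / real n" by (simp add: field_simps)
      then show ?thesis by simp
    qed
    finally show ?case .
  qed
  moreover have "1 / (real n - 1) \<ge> 0" using True assms by simp
  ultimately show ?thesis by simp
qed

definition Pot :: "nat \<Rightarrow> real" where
  "Pot k = (if odd k then 1/(2*(real k - 2)) else 1/(2*(real k - 1)))"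

lemma pot_sum:
  assumes m: "m \<ge> 3"
  shows "(\<Sum>i\<in>{m..<n}. if odd i then 1/(real i*(real i-2)) else 0) \<le> Pot m"
proof (cases "m \<le> n")
  case False
  then show ?thesis using m by (simp add: Pot_def)
next
  case True
  have "(\<Sum>i\<in>{m..<n}. if odd i then 1/(real i*(real i-2)) else 0) = Pot m - Pot n"
    using True
  proof (induction n rule: dec_induct)
    case base then show ?case by simp
  next
    case (step n)
    have n3: "real n \<ge> 3" using step m by simp
    have "(if odd n then 1/(real n*(real n-2)) else 0) = Pot n - Pot (Suc n)"
    proof (cases "odd n")
      case True
      have ne: "real n - 2 \<noteq> 0" "real n \<noteq> 0" using n3 by auto
      have "1/(real n*(real n-2)) = 1/(2*(real n - 2)) - 1/(2*(real (Suc n) - 1))"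
        using ne by (simp add: field_simps)
      then show ?thesis using True by (simp add: Pot_def)
    next
      case False
      then show ?thesis by (simp add: Pot_def)
    qed
    then show ?case using step by simp
  qed
  moreover have "Pot n \<ge> 0" using True m by (simp add: Pot_def)
  ultimately show ?thesis by simp
qed

lemma isum_eq: "isum f a b = (\<Sum>k\<in>{a..b}. f k)"
proof (induction f a b rule: isum.induct)
  case (1 f a b)
  show ?case
  proof (cases "b < a")
    case True then show ?thesis by (subst isum.simps) simp
  next
    case False
    then have "{a..b} = insert a {a+1..b}" by auto
    moreover have "isum f a b = f a + isum f (a+1) b" using False by (subst isum.simps) simp
    ultimately show ?thesis using 1 False by simp
  qed
qed

lemma prime_int_cand: "prime (i::nat) \<Longrightarrow> (q::int) \<ge> 2 \<Longrightarrow> q dvd int i \<Longrightarrow> q = int i"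
proof -
  assume pr: "prime i" and q: "q \<ge> 2" and d: "q dvd int i"
  have "int (nat q) dvd int i" using q d by simp
  then have "nat q dvd i" by (simp only: int_dvd_int_iff)
  then have "nat q = i" using prime_cand[OF pr] q by simp
  then show "q = int i" using q by simp
qed

lemma prime_candI: "prime i \<Longrightarrow> candI (int i)"
  unfolding candI_def using prime_int_cand[of i] by auto

lemma prime_odd_big: "prime (i::nat) \<Longrightarrow> i \<ge> 3 \<Longrightarrow> odd i"
  using prime_cand[of i 2] by auto

definition hp :: "nat \<Rightarrow> real" where "hp i = (if prime i then 1/(real i*(real i-1)) else 0)"

lemma hp_nonneg: "hp i \<ge> 0"
  unfolding hp_def using prime_ge_2_nat[of i] by auto

lemma ktail: "(\<Sum>i\<in>{31..<n}. hp i) \<le> real_of_int KI / 100000000"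
proof -
  define G where "G = (\<lambda>n::int. if candI n then cdiv SS (n*(n-1)) else 0)"
  define N where "N = max n 1001"
  have "(\<Sum>i\<in>{31..<n}. hp i) \<le> (\<Sum>i\<in>{31..<N}. hp i)"
    by (rule sum_mono2) (auto simp: N_def hp_nonneg)
  also have "\<dots> = (\<Sum>i\<in>{31..<1001}. hp i) + (\<Sum>i\<in>{1001..<N}. hp i)"
    by (rule sum.atLeastLessThan_concat[symmetric]) (auto simp: N_def)
  also have "(\<Sum>i\<in>{31..<1001}. hp i) \<le> (\<Sum>i\<in>{31..<1001}. real_of_int (G (int i)) / 100000000)"
  proof (rule sum_mono)
    fix i :: nat assume i: "i \<in> {31..<1001}"
    show "hp i \<le> real_of_int (G (int i)) / 100000000"
    proof (cases "prime i")
      case True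
      have D: "int i * (int i - 1) > 0" using i by simp
      have "1/(real i*(real i-1)) = (real_of_int SS / real_of_int (int i * (int i - 1))) / 100000000"
        by (simp add: SS_def)
      also have "\<dots> \<le> real_of_int (cdiv SS (int i * (int i - 1))) / 100000000"
        by (intro divide_right_mono cdiv_ge[OF D]) auto
      finally show ?thesis using True prime_candI[OF True] by (simp add: hp_def G_def)
    next
      case False
      have "G (int i) \<ge> 0"
      proof -
        have D: "int i * (int i - 1) > 0" using i by simp
        have "0 \<le> real_of_int SS / real_of_int (int i * (int i - 1))"
        proof -
          have "real i \<ge> 31" using i by simp
          then have "real_of_int (int i * (int i - 1)) > 0" by simp
          then show ?thesis by (simp add: SS_def)
        qed
        also have "\<dots> \<le> real_of_int (cdiv SS (int i * (int i - 1)))" by (rule cdiv_ge[OF D])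
        finally show ?thesis by (simp add: G_def)
      qed
      then show ?thesis using False by (simp add: hp_def)
    qed
  qed
  also have "(\<Sum>i\<in>{31..<1001}. real_of_int (G (int i)) / 100000000) = real_of_int (isum G 31 1000) / 100000000"
  proof -
    have "(\<Sum>i\<in>{31..<1001::nat}. G (int i)) = (\<Sum>k\<in>int ` {31..1000}. G k)"
      by (subst sum.reindex) (auto simp: atLeastLessThanSuc_atLeastAtMost[symmetric])
    also have "\<dots> = isum G 31 1000" by (simp add: image_int_atLeastAtMost isum_eq)
    finally have "real_of_int (\<Sum>i\<in>{31..<1001::nat}. G (int i)) = real_of_int (isum G 31 1000)" by simp
    then show ?thesis by (simp add: sum_divide_distrib[symmetric] of_int_sum)
  qed
  also have "(\<Sum>i\<in>{1001..<N}. hp i) \<le> (\<Sum>i\<in>{1001..<N}. if odd i then 1/(real i*(real i-2)) else 0)"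
  proof (rule sum_mono)
    fix i :: nat assume i: "i \<in> {1001..<N}"
    show "hp i \<le> (if odd i then 1/(real i*(real i-2)) else 0)"
    proof (cases "prime i")
      case True
      then have "odd i" using prime_odd_big i by auto
      moreover have "1/(real i*(real i-1)) \<le> 1/(real i*(real i-2))"
        using i by (intro divide_left_mono mult_left_mono) auto
      ultimately show ?thesis using True by (simp add: hp_def)
    next
      case False
      have "real i \<ge> 1001" using i by simp
      then have "0 \<le> real i * (real i - 2)" by simp
      then show ?thesis using False by (simp add: hp_def)
    qed
  qed
  also have "\<dots> \<le> Pot 1001" by (rule pot_sum) simp
  also have "Pot 1001 \<le> real_of_int (cdiv SS (2*999)) / 100000000"
  proof -
    have "Pot 1001 = (real_of_int SS / real_of_int (2*999)) / 100000000" by (simp add: Pot_def SS_def)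
    also have "\<dots> \<le> real_of_int (cdiv SS (2*999)) / 100000000"
      by (intro divide_right_mono cdiv_ge) auto
    finally show ?thesis .
  qed
  finally show ?thesis by (simp add: KI_def G_def add_divide_distrib)
qed


definition SPn :: "nat list" where "SPn = [2,3,5,7,11,13,17,19,23,29]"
definition SPon :: "nat list" where "SPon = [3,5,7,11,13,17,19,23,29]"

lemma Fsum:
  "(\<Sum>p<n. if prime p then alpha p else 0) \<le> sum_list (map alpha SPn) + real_of_int KI / 100000000"
proof -
  define F where "F = (\<lambda>p. if prime p then alpha p else 0)"
  have F0: "F p \<ge> 0" for p unfolding F_def using alpha_nonneg prime_ge_2_nat by auto
  define N where "N = max n 31"
  have "(\<Sum>p<n. F p) \<le> (\<Sum>p<N. F p)"
    by (rule sum_mono2) (auto simp: N_def F0)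
  also have "\<dots> = (\<Sum>p\<in>{0..<31}. F p) + (\<Sum>p\<in>{31..<N}. F p)"
    unfolding lessThan_atLeast0 by (rule sum.atLeastLessThan_concat[symmetric]) (auto simp: N_def)
  also have "(\<Sum>p\<in>{0..<31}. F p) = (\<Sum>p\<in>set SPn. F p)"
  proof (rule sum.mono_neutral_right)
    show "set SPn \<subseteq> {0..<31}" by (auto simp: SPn_def)
    show "\<forall>i\<in>{0..<31} - set SPn. F i = 0"
    proof
      fix i assume i: "i \<in> {0..<31} - set SPn"
      have "\<not> prime i"
      proof
        assume "prime i"
        then have "i \<in> set SPn" using small_primes[of i] i by (simp add: SPn_def)
        then show False using i by simp
      qed
      then show "F i = 0" by (simp add: F_def)
    qed
  qed auto
  also have "\<dots> \<le> (\<Sum>p\<in>set SPn. alpha p)"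
    by (rule sum_mono) (auto simp: F_def SPn_def intro: alpha_nonneg)
  also have "\<dots> = sum_list (map alpha SPn)" by (simp add: SPn_def)
  also have "(\<Sum>p\<in>{31..<N}. F p) \<le> (\<Sum>p\<in>{31..<N}. hp p)"
    by (rule sum_mono) (auto simp: F_def hp_def intro: alpha_mid)
  also have "\<dots> \<le> real_of_int KI / 100000000" by (rule ktail)
  finally show ?thesis by (simp add: F_def)
qed

lemma fj_pos: "0 < (if prime p \<and> p \<ge> 3 then beta j p else 1)"
  using beta_pos[of p j] by auto

lemma fj_le1: "(if prime p \<and> p \<ge> 3 then beta j p else 1) \<le> 1"
  using beta_bounds(2)[of p j] by auto

lemma fj_tail: "1 - (if prime i \<and> i \<ge> 3 then beta j i else 1) \<le> real j * hp i"
proof (cases "prime i \<and> i \<ge> 3")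
  case True
  then have "1 - beta j i \<le> real j / (real i * (real i - 1))" using one_minus_beta[of i j] by auto
  then show ?thesis using True by (simp add: hp_def)
next
  case False
  then have "(if prime i \<and> i \<ge> 3 then beta j i else 1) = 1" by (rule if_not_P)
  then show ?thesis using hp_nonneg[of i] by simp
qed

lemma hp_le: "i \<ge> 2 \<Longrightarrow> hp i \<le> 1 / (real i * (real i - 1))"
  unfolding hp_def by auto

lemma prodinf_gen:
  assumes j: "j \<ge> 1"
  shows "0 \<le> prodinf (\<lambda>p. if prime p \<and> p \<ge> 3 then beta j p else 1)
       \<and> prodinf (\<lambda>p. if prime p \<and> p \<ge> 3 then beta j p else 1) \<le> 1"
proof -
  define f where "f = (\<lambda>p. if prime p \<and> p \<ge> 3 then beta j p else 1)"
  define a where "a = 2*j+2"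
  have S: "(\<Sum>i\<in>{a..<n}. 1 - f i) \<le> real j / (2*real j + 1)" for n
  proof -
    have "(\<Sum>i\<in>{a..<n}. 1 - f i) \<le> (\<Sum>i\<in>{a..<n}. real j * (1 / (real i * (real i - 1))))"
    proof (rule sum_mono)
      fix i assume "i \<in> {a..<n}"
      then have "i \<ge> 2" by (simp add: a_def)
      then have "real j * hp i \<le> real j * (1 / (real i * (real i - 1)))" using hp_le by (intro mult_left_mono) auto
      then show "1 - f i \<le> real j * (1 / (real i * (real i - 1)))" using fj_tail[of i j] by (simp add: f_def)
    qed
    also have "\<dots> = real j * (\<Sum>i\<in>{a..<n}. 1 / (real i * (real i - 1)))" by (simp add: sum_distrib_left)
    also have "\<dots> \<le> real j * (1 / (real a - 1))" by (intro mult_left_mono telesc) (auto simp: a_def)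
    also have "\<dots> = real j / (2*real j + 1)" by (simp add: a_def)
    finally show ?thesis .
  qed
  have B: "real j / (2*real j + 1) < 1" by simp
  have P: "prodinf f \<ge> (\<Prod>i<a. f i) * (1 - real j / (2*real j + 1))" "prodinf f \<le> 1"
    using prod_bound[of f a "real j / (2*real j + 1)", OF _ _ S B] fj_pos fj_le1 unfolding f_def by auto
  have f0: "0 \<le> f i" for i unfolding f_def by (rule less_imp_le[OF fj_pos])
  have "(\<Prod>i<a. f i) \<ge> 0" using f0 by (intro prod_nonneg) auto
  moreover have "1 - real j / (2*real j + 1) \<ge> 0" using B by simp
  ultimately have "prodinf f \<ge> 0" using P(1) by (meson mult_nonneg_nonneg order_trans)
  then show ?thesis using P(2) by (simp add: f_def)
qed

lemma prodinf_low:
  assumes j: "j \<ge> 1" "j \<le> 14"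
  shows "prodinf (\<lambda>p. if prime p \<and> p \<ge> 3 then beta j p else 1)
      \<ge> prod_list (map (beta j) SPon) * (1 - real j * 774528 / 100000000)"
proof -
  define f where "f = (\<lambda>p. if prime p \<and> p \<ge> 3 then beta j p else 1)"
  define B where "B = real j * (real_of_int KI / 100000000)"
  have KI: "real_of_int KI \<le> 774528" using KI_le by simp
  have S: "(\<Sum>i\<in>{31..<n}. 1 - f i) \<le> B" for n
  proof -
    have "(\<Sum>i\<in>{31..<n}. 1 - f i) \<le> (\<Sum>i\<in>{31..<n}. real j * hp i)"
    proof (rule sum_mono)
      fix i show "1 - f i \<le> real j * hp i" unfolding f_def by (rule fj_tail)
    qed
    also have "\<dots> = real j * (\<Sum>i\<in>{31..<n}. hp i)" by (simp add: sum_distrib_left)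
    also have "\<dots> \<le> B" unfolding B_def by (intro mult_left_mono ktail) auto
    finally show ?thesis .
  qed
  have "real j * real_of_int KI \<le> real j * 774528" by (rule mult_left_mono[OF KI]) simp
  then have Ble: "B \<le> real j * 774528 / 100000000" unfolding B_def by (simp add: mult.commute)
  have B1: "B < 1"
  proof -
    have "real j * 774528 / 100000000 < 1" using j by simp
    then show ?thesis using Ble by simp
  qed
  have P: "prodinf f \<ge> (\<Prod>i<31. f i) * (1 - B)"
    using prod_bound(1)[of f 31 B, OF _ _ S B1] fj_pos fj_le1 unfolding f_def by auto
  have sub: "(\<Prod>i<31. f i) = (\<Prod>i\<in>set SPon. f i)"
  proof (rule prod.mono_neutral_right)
    show "set SPon \<subseteq> {..<31}" by (auto simp: SPon_def)
    show "\<forall>i\<in>{..<31} - set SPon. f i = 1"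
    proof
      fix i assume i: "i \<in> {..<31} - set SPon"
      have "\<not> (prime i \<and> i \<ge> 3)"
      proof
        assume "prime i \<and> i \<ge> 3"
        then have "i \<in> set SPon" using small_primes[of i] i by (auto simp: SPon_def)
        then show False using i by simp
      qed
      then show "f i = 1" unfolding f_def by (rule if_not_P)
    qed
  qed auto
  have ge: "(\<Prod>i\<in>set SPon. f i) \<ge> (\<Prod>i\<in>set SPon. beta j i)"
  proof (rule prod_mono)
    fix i assume "i \<in> set SPon"
    then have i2: "i \<ge> 2" by (auto simp: SPon_def)
    show "0 \<le> beta j i \<and> beta j i \<le> f i"
      using beta_pos[OF i2, of j] beta_bounds(2)[OF i2, of j] by (auto simp: f_def)
  qed
  have pl: "(\<Prod>i\<in>set SPon. beta j i) = prod_list (map (beta j) SPon)" by (simp add: SPon_def)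
  have pl0: "prod_list (map (beta j) SPon) \<ge> 0"
    unfolding pl[symmetric]
  proof (intro prod_nonneg)
    fix i assume "i \<in> set SPon"
    then have "i \<ge> 2" by (auto simp: SPon_def)
    then show "0 \<le> beta j i" using beta_pos[of i j] by simp
  qed
  have "prod_list (map (beta j) SPon) * (1 - real j * 774528 / 100000000) \<le> (\<Prod>i<31. f i) * (1 - B)"
    using sub ge pl pl0 Ble B1 j by (intro mult_mono) auto
  then show ?thesis using P by (simp add: f_def)
qed

lemma beta2_ge: "beta j 2 \<ge> 1/2"
proof -
  have "beta j 2 \<ge> (1 - 1/real 2) * (\<Sum>m<1. (1/real 2)^m / geo_part 2 m ^ j) + (1/real 2)^1 * (1 - 1/real 2)^j"
    by (rule beta_bounds(1)) simp
  moreover have "geo_part 2 0 = 1" by (simp add: geo_part_def)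
  ultimately have A: "1/2 + (1/2::real)^j/2 \<le> beta j 2" by simp
  have "(1/2::real)^j \<ge> 0" by simp
  then show ?thesis using A by linarith
qed

lemma beta2_le: "beta j 2 \<le> 1/2 + (2/3)^j/2"
proof -
  define b where "b = (\<lambda>m. (1/2::real)^m / geo_part 2 m ^ j)"
  have beq: "beta j 2 = (1/2) * suminf b"
    by (simp add: beta_def b_def power_int_minus power_one_over field_simps)
  have g1: "geo_part 2 m ^ j \<ge> 1" for m using geo_ge1[of 2 m] by (simp add: one_le_power)
  have g32: "geo_part 2 (Suc m) \<ge> 3/2" for m
  proof -
    have "(\<Sum>i\<in>{0,1}. 1 / real 2 ^ i) \<le> (\<Sum>i\<le>Suc m. 1 / real 2 ^ i)"
      by (rule sum_mono2) auto
    then show ?thesis by (simp add: geo_part_def)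
  qed
  have bU: "b m \<le> 1 * (1/2)^(m + 0)" for m
  proof -
    have "(1/2::real)^m / geo_part 2 m ^ j \<le> (1/2)^m / 1"
      using g1[of m] by (intro divide_left_mono) auto
    then show ?thesis unfolding b_def by simp
  qed
  have b0: "0 \<le> b m" for m unfolding b_def using g1[of m] by simp
  have gs: "(\<lambda>n. 1 * (1/2::real) ^ (n + 0)) sums (1 * (1/2)^0 / (1 - 1/2))"
    by (rule geo_sums) simp
  have sb: "summable b"
    by (rule summable_comparison_test'[OF sums_summable[OF gs], of 0]) (use b0 bU in auto)
  have bU2: "b (n + 1) \<le> (2/3)^j * (1/2)^(n+1)" for n
  proof -
    have "(3/2)^j \<le> geo_part 2 (Suc n) ^ j" using g32[of n] by (intro power_mono) auto
    moreover have "geo_part 2 (Suc n) ^ j > 0" using g1[of "Suc n"] by simp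
    ultimately have "1 / geo_part 2 (Suc n) ^ j \<le> 1 / (3/2)^j" by (intro divide_left_mono) auto
    also have "\<dots> = (2/3)^j" by (simp add: power_divide)
    finally have "1 / geo_part 2 (Suc n) ^ j \<le> (2/3)^j" .
    then have "(1/2)^(n+1) * (1 / geo_part 2 (Suc n) ^ j) \<le> (1/2)^(n+1) * (2/3::real)^j"
      by (intro mult_left_mono) auto
    then show ?thesis unfolding b_def by (simp add: mult.commute)
  qed
  have gs2: "(\<lambda>n. (2/3::real)^j * (1/2) ^ (n + 1)) sums ((2/3)^j * (1/2)^1 / (1 - 1/2))"
    by (rule geo_sums) simp
  have t: "(\<Sum>n. b (n + 1)) \<le> (2/3)^j"
    using sums_le[OF bU2 summable_sums[OF summable_ignore_initial_segment[OF sb]] gs2] by simp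
  have "suminf b = (\<Sum>n. b (n + 1)) + sum b {..<1}" by (rule suminf_split_initial_segment[OF sb])
  moreover have "sum b {..<1} = 1" by (simp add: b_def geo_part_def)
  ultimately have "suminf b \<le> (2/3)^j + 1" using t by simp
  then show ?thesis using beq by simp
qed


definition Tf :: "int \<Rightarrow> int \<Rightarrow> int \<Rightarrow> int \<Rightarrow> int" where
  "Tf K j b pr = ((max 0 (2 * b - SS) * pr div SS) * max 0 (SS - j * K) div SS) div j"

lemma tL_closed: "tL K j (map f [0..<n]) (map g [0..<n]) = (\<Sum>i<n. Tf K (j + int i) (f i) (g i))"
proof (induction n arbitrary: f g j)
  case 0 then show ?case by simp
next
  case (Suc n)
  have "tL K j (map f [0..<Suc n]) (map g [0..<Suc n])
      = Tf K j (f 0) (g 0) + tL K (j+1) (map (\<lambda>i. f (Suc i)) [0..<n]) (map (\<lambda>i. g (Suc i)) [0..<n])"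
    unfolding map_upt_Suc by (simp add: Tf_def)
  also have "\<dots> = Tf K j (f 0) (g 0) + (\<Sum>i<n. Tf K (j + 1 + int i) (f (Suc i)) (g (Suc i)))"
    using Suc by simp
  also have "\<dots> = (\<Sum>i<Suc n. Tf K (j + int i) (f i) (g i))"
    by (subst sum.lessThan_Suc_shift) (simp add: ac_simps)
  finally show ?case .
qed

fun PRf :: "int list \<Rightarrow> nat \<Rightarrow> int" where
  "PRf [] i = SS" | "PRf (p#ps) i = bsel p 0 (nat (Mb p)) i * PRf ps i div SS"

lemma Mb_nonneg: "Mb p \<ge> 0" by (simp add: Mb_def)

lemma PR_gen: "foldr (\<lambda>p acc. mull (BS p 1 0 (Mb p)) acc) ps (replicate 14 SS) = map (PRf ps) [0..<14]"
proof (induction ps)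
  case Nil
  have "map (\<lambda>_. SS) [0..<14] = replicate 14 SS" by (simp add: map_replicate_const)
  then show ?case by simp
next
  case (Cons p ps)
  have "BS p 1 0 (Mb p) = BS p (p^0) (int 0) (int (nat (Mb p)))" using Mb_nonneg[of p] by simp
  also have "\<dots> = map (bsel p 0 (nat (Mb p))) [0..<14]" by (rule BS_closed) simp
  finally have "BS p 1 0 (Mb p) = map (bsel p 0 (nat (Mb p))) [0..<14]" .
  then show ?case using Cons by (simp add: mull_map)
qed

lemma PR_closed: "PR = map (PRf SPo) [0..<14]"
  unfolding PR_def by (rule PR_gen)

lemma PRf_bound:
  "(\<forall>n\<in>set ns. n \<ge> 2) \<Longrightarrow> 0 \<le> PRf (map int ns) i \<and>
     real_of_int (PRf (map int ns) i) \<le> 100000000 * prod_list (map (beta (Suc i)) ns)"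
proof (induction ns)
  case Nil then show ?case by (simp add: SS_def)
next
  case (Cons n ns)
  have n: "n \<ge> 2" using Cons by simp
  have IH: "0 \<le> PRf (map int ns) i \<and> real_of_int (PRf (map int ns) i) \<le> 100000000 * prod_list (map (beta (Suc i)) ns)"
    using Cons by simp
  have B: "0 \<le> bsel (int n) 0 (nat (Mb (int n))) i \<and> real_of_int (bsel (int n) 0 (nat (Mb (int n))) i) \<le> 100000000 * beta (Suc i) n"
    by (rule bsel_le[OF n])
  define X where "X = bsel (int n) 0 (nat (Mb (int n))) i * PRf (map int ns) i"
  have X0: "0 \<le> X" using B IH by (simp add: X_def)
  have "real_of_int X \<le> (100000000 * beta (Suc i) n) * (100000000 * prod_list (map (beta (Suc i)) ns))"
    unfolding X_def of_int_mult using B IH by (intro mult_mono) auto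
  then have "0 \<le> X div SS \<and> real_of_int (X div SS) \<le> (100000000 * beta (Suc i) n) * (100000000 * prod_list (map (beta (Suc i)) ns)) / real_of_int SS"
    using divq_le[OF X0] by (simp add: SS_def)
  then show ?case by (simp add: X_def SS_def)
qed

lemma T_le:
  fixes b pr j K :: int and \<beta> Y P :: real
  assumes b: "0 \<le> b" "real_of_int b \<le> 100000000 * \<beta>" "\<beta> \<ge> 1/2"
    and pr: "0 \<le> pr" "real_of_int pr \<le> 100000000 * Y" "Y \<ge> 0"
    and P: "P \<ge> Y * (1 - real_of_int j * real_of_int K / 100000000)" "P \<ge> 0"
    and j: "j \<ge> 1"
  shows "real_of_int (Tf K j b pr) \<le> 100000000 * (1 / real_of_int j * ((2*\<beta> - 1) * P))"
proof -
  define u where "u = max 0 (2 * b - SS)"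
  have u: "0 \<le> u" "real_of_int u \<le> 100000000 * (2*\<beta> - 1)"
    using b by (auto simp: u_def SS_def)
  define v where "v = u * pr div SS"
  have "0 \<le> u * pr" using u pr by simp
  moreover have "real_of_int (u * pr) \<le> (100000000 * (2*\<beta> - 1)) * (100000000 * Y)"
    unfolding of_int_mult using u pr b by (intro mult_mono) auto
  ultimately have v: "0 \<le> v" "real_of_int v \<le> 100000000 * ((2*\<beta> - 1) * Y)"
    using divq_le[of "u * pr" "(100000000 * (2*\<beta> - 1)) * (100000000 * Y)" SS] unfolding v_def by (auto simp: SS_def algebra_simps)
  define w where "w = max 0 (SS - j * K)"
  define m where "m = max 0 (1 - real_of_int j * real_of_int K / 100000000)"
  have w1: "real_of_int w = max 0 (100000000 - real_of_int j * real_of_int K)"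
    unfolding w_def SS_def by (simp add: of_int_max)
  have w2: "100000000 * m = max 0 (100000000 - real_of_int j * real_of_int K)"
    unfolding m_def by (simp add: max_def field_simps)
  have w: "0 \<le> w" "real_of_int w \<le> 100000000 * m" using w1 w2 by (auto simp: w_def)
  have Pm: "Y * m \<le> P" unfolding m_def using P pr by (auto simp: max_def)
  define z where "z = v * w div SS"
  have "0 \<le> v * w" using v w by simp
  moreover have "real_of_int (v * w) \<le> (100000000 * ((2*\<beta> - 1) * Y)) * (100000000 * m)"
    unfolding of_int_mult using v w by (intro mult_mono) auto
  ultimately have z: "0 \<le> z" "real_of_int z \<le> 100000000 * ((2*\<beta> - 1) * Y * m)"
    using divq_le[of "v * w" "(100000000 * ((2*\<beta> - 1) * Y)) * (100000000 * m)" SS] unfolding z_def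
    by (auto simp: SS_def algebra_simps)
  have "real_of_int (z div j) \<le> real_of_int z / real_of_int j" by (rule div_le')
  also have "\<dots> \<le> 100000000 * ((2*\<beta> - 1) * Y * m) / real_of_int j"
    using z j by (intro divide_right_mono) auto
  also have "\<dots> \<le> 100000000 * ((2*\<beta> - 1) * P) / real_of_int j"
  proof -
    have "(2*\<beta> - 1) * (Y * m) \<le> (2*\<beta> - 1) * P" using Pm b by (intro mult_left_mono) auto
    then show ?thesis using j by (intro divide_right_mono) (auto simp: mult.assoc)
  qed
  also have "\<dots> = 100000000 * (1 / real_of_int j * ((2*\<beta> - 1) * P))" by simp
  finally show ?thesis by (simp add: Tf_def u_def v_def w_def z_def)
qed


lemma Ma_nonneg: "Ma p \<ge> 0" by (simp add: Ma_def)

lemma alpha_Ma: "p \<ge> 2 \<Longrightarrow> alpha p \<le> real_of_int (alphaI (int p) (Ma (int p))) / 100000000"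
  using alpha_le_I[of p "nat (Ma (int p))"] Ma_nonneg[of "int p"] by simp

lemma alpha_list: "(\<forall>n\<in>set ns. n \<ge> 2) \<Longrightarrow>
   sum_list (map alpha ns) \<le> real_of_int (sum_list (map (\<lambda>p. alphaI p (Ma p)) (map int ns))) / 100000000"
proof (induction ns)
  case Nil then show ?case by simp
next
  case (Cons n ns)
  then have "alpha n \<le> real_of_int (alphaI (int n) (Ma (int n))) / 100000000" using alpha_Ma by simp
  then show ?case using Cons by (simp add: add_divide_distrib)
qed

lemma tm_bounds:
  "0 \<le> 1 / real (Suc k) * ((2 * beta (Suc k) 2 - 1) * prodinf (\<lambda>p. if prime p \<and> p \<ge> 3 then beta (Suc k) p else 1))
   \<and> 1 / real (Suc k) * ((2 * beta (Suc k) 2 - 1) * prodinf (\<lambda>p. if prime p \<and> p \<ge> 3 then beta (Suc k) p else 1)) \<le> (2/3)^k"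
proof -
  define P where "P = prodinf (\<lambda>p. if prime p \<and> p \<ge> 3 then beta (Suc k) p else 1)"
  define X where "X = 2 * beta (Suc k) 2 - 1"
  have P: "0 \<le> P" "P \<le> 1" using prodinf_gen[of "Suc k"] by (auto simp: P_def)
  have X: "0 \<le> X" "X \<le> (2/3)^Suc k" using beta2_ge[of "Suc k"] beta2_le[of "Suc k"] by (auto simp: X_def)
  have "1 / real (Suc k) * (X * P) \<le> 1 * (X * 1)"
    using P X by (intro mult_mono) (auto simp: divide_le_eq_1)
  also have "\<dots> \<le> (2/3)^k" using X(2) by (simp add: power_Suc) (smt (verit) X(1) zero_le_power)
  finally show ?thesis using P X by (simp add: P_def X_def)
qed

theorem corollary5p5:
  shows "lambda_const < - 0.030"
proof -
  define F where "F = (\<lambda>p. if prime p then alpha p else 0)"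
  define tm where "tm = (\<lambda>k. let j = Suc k in
          1 / real j * ((2 * beta j 2 - 1) * (\<Prod>p. if prime p \<and> p \<ge> 3 then beta j p else 1)))"
  have lam: "lambda_const = alpha 2 + suminf F - suminf tm"
    unfolding lambda_const_def F_def tm_def ..
  have tmb: "0 \<le> tm k \<and> tm k \<le> (2/3)^k" for k
    using tm_bounds[of k] by (simp add: tm_def Let_def)
  have F0: "0 \<le> F p" for p unfolding F_def using alpha_nonneg prime_ge_2_nat by auto
  define BA where "BA = sum_list (map alpha SPn) + real_of_int KI / 100000000"
  have Fb: "sum F {..<n} \<le> BA" for n using Fsum[of n] by (simp add: F_def BA_def)
  have sF: "summable F" by (rule summableI_nonneg_bounded[OF F0 Fb])
  have F_le: "suminf F \<le> BA" by (rule suminf_le_const[OF sF Fb])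
  have sT: "summable tm"
    by (rule summable_comparison_test'[OF summable_geometric[of "2/3::real"], of 0]) (use tmb in auto)
  have T_ge: "sum tm {..<14} \<le> suminf tm"
    by (rule sum_le_suminf[OF sT]) (use tmb in auto)
  define K0 :: int where "K0 = 774528"
  have BS2: "BS 2 1 0 (Mb 2) = map (bsel 2 0 (nat (Mb 2))) [0..<14]"
    using BS_closed[of 0 "nat (Mb 2)" 2] by (simp add: Mb_def)
  have tL_eq: "tL K0 1 (BS 2 1 0 (Mb 2)) PR = (\<Sum>k<14. Tf K0 (1 + int k) (bsel 2 0 (nat (Mb 2)) k) (PRf SPo k))"
    unfolding BS2 PR_closed tL_closed ..
  have Tk: "real_of_int (Tf K0 (1 + int k) (bsel 2 0 (nat (Mb 2)) k) (PRf SPo k)) \<le> 100000000 * tm k" if k: "k < 14" for k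
  proof -
    have b: "0 \<le> bsel (int 2) 0 (nat (Mb 2)) k \<and> real_of_int (bsel (int 2) 0 (nat (Mb 2)) k) \<le> 100000000 * beta (Suc k) 2"
      by (rule bsel_le) simp
    have SPo_eq: "SPo = map int SPon" by (simp add: SPo_def SPon_def)
    have pr: "0 \<le> PRf SPo k \<and> real_of_int (PRf SPo k) \<le> 100000000 * prod_list (map (beta (Suc k)) SPon)"
      unfolding SPo_eq by (rule PRf_bound) (auto simp: SPon_def)
    have Y0: "prod_list (map (beta (Suc k)) SPon) \<ge> 0"
    proof -
      have "prod_list (map (beta (Suc k)) SPon) = (\<Prod>i\<in>set SPon. beta (Suc k) i)" by (simp add: SPon_def)
      also have "\<dots> \<ge> 0"
      proof (intro prod_nonneg)
        fix i assume "i \<in> set SPon"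
        then have "i \<ge> 2" by (auto simp: SPon_def)
        then show "0 \<le> beta (Suc k) i" using beta_pos[of i "Suc k"] by simp
      qed
      finally show ?thesis .
    qed
    have Pl: "prodinf (\<lambda>p. if prime p \<and> p \<ge> 3 then beta (Suc k) p else 1)
      \<ge> prod_list (map (beta (Suc k)) SPon) * (1 - real (Suc k) * 774528 / 100000000)"
      by (rule prodinf_low) (use k in auto)
    have P0: "prodinf (\<lambda>p. if prime p \<and> p \<ge> 3 then beta (Suc k) p else 1) \<ge> 0"
      using prodinf_gen[of "Suc k"] by simp
    have "real_of_int (Tf K0 (1 + int k) (bsel 2 0 (nat (Mb 2)) k) (PRf SPo k))
        \<le> 100000000 * (1 / real_of_int (1 + int k) * ((2 * beta (Suc k) 2 - 1) *
             prodinf (\<lambda>p. if prime p \<and> p \<ge> 3 then beta (Suc k) p else 1)))"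
      by (rule T_le[OF _ _ beta2_ge _ _ Y0 _ P0]) (use b pr Pl in \<open>auto simp: K0_def\<close>)
    then show ?thesis by (simp add: tm_def Let_def add.commute)
  qed
  have "real_of_int (tL K0 1 (BS 2 1 0 (Mb 2)) PR) / 100000000 \<le> sum tm {..<14}"
  proof -
    have "real_of_int (tL K0 1 (BS 2 1 0 (Mb 2)) PR) = (\<Sum>k<14. real_of_int (Tf K0 (1 + int k) (bsel 2 0 (nat (Mb 2)) k) (PRf SPo k)))"
      unfolding tL_eq by simp
    also have "\<dots> \<le> (\<Sum>k<14. 100000000 * tm k)" by (rule sum_mono) (use Tk in auto)
    finally show ?thesis by (simp add: sum_distrib_left[symmetric])
  qed
  with T_ge have Tlow: "real_of_int (tL K0 1 (BS 2 1 0 (Mb 2)) PR) / 100000000 \<le> suminf tm" by simp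
  have a2: "alpha 2 \<le> real_of_int (alphaI 2 (Ma 2)) / 100000000" using alpha_Ma[of 2] by simp
  have aS: "sum_list (map alpha SPn) \<le> real_of_int (alphaI 2 (Ma 2)) / 100000000
      + real_of_int (sum_list (map (\<lambda>p. alphaI p (Ma p)) SPo)) / 100000000"
  proof -
    have "sum_list (map alpha SPon) \<le> real_of_int (sum_list (map (\<lambda>p. alphaI p (Ma p)) (map int SPon))) / 100000000"
      by (rule alpha_list) (auto simp: SPon_def)
    moreover have "map int SPon = SPo" by (simp add: SPo_def SPon_def)
    moreover have "sum_list (map alpha SPn) = alpha 2 + sum_list (map alpha SPon)" by (simp add: SPn_def SPon_def)
    ultimately show ?thesis using a2 by simp
  qed
  have KIb: "real_of_int KI \<le> real_of_int K0" using KI_le by (simp add: K0_def)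
  have "lambda_const \<le> real_of_int (AI K0 - tL K0 1 (BS 2 1 0 (Mb 2)) PR) / 100000000"
  proof -
    have "lambda_const \<le> alpha 2 + BA - real_of_int (tL K0 1 (BS 2 1 0 (Mb 2)) PR) / 100000000"
      using lam F_le Tlow by linarith
    also have "\<dots> \<le> real_of_int (AI K0 - tL K0 1 (BS 2 1 0 (Mb 2)) PR) / 100000000"
      using a2 aS KIb unfolding BA_def AI_def by (simp add: add_divide_distrib diff_divide_distrib)
    finally show ?thesis .
  qed
  moreover have "100 * (AI K0 - tL K0 1 (BS 2 1 0 (Mb 2)) PR) < - 3 * SS"
    using numeric_main by (simp add: K0_def)
  then have "real_of_int (AI K0 - tL K0 1 (BS 2 1 0 (Mb 2)) PR) / 100000000 < - 0.030"
    by (simp add: SS_def)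
  ultimately show ?thesis by linarith
qed


end
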